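(* Assume $p$ is unbounded. Fix $m\ge1$ and positive integers $n_1<n_2<\cdots<n_m$. For each $k\ge1$ let $(r^{(k)}_1,\dots,r^{(k)}_m)$ be an $m$-tuple of positive integers with $\sum_{i=1}^m p_{r^{(k)}_i}>0$, such that $\min_{1\le i\le m}r^{(k)}_i\to\infty$ as $k\to\infty$, and such that for every $1\le j<m$, $$\limsup_{k\to\infty}\frac{r^{(k)}_j}{\min_{j<i\le m}r^{(k)}_i}<\infty.$$ Let $$E_k=\bigcup_{i=1}^m\Big\{M_{n_i}=r^{(k)}_i,\ M_{n_j}<r^{(k)}_j\ \text{for all } 1\le j\le m,\ j\ne i\Big\}.$$ Then, as $k\to\infty$, $$\mathbf{P}[E_k]\sim\sum_{i=1}^m\mu^{n_i}p_{r^{(k)}_i}.$$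
   Context: Let $p=(p_0,p_1,p_2,\dots)$ be a probability distribution on the nonnegative integers with mean $\mu=\sum_k kp_k\in(0,\infty)$, and let $\tau(p)$ be a Galton–Watson tree with offspring distribution $p$: it starts with a single root at generation $0$, and every vertex independently has $k$ children with probability $p_k$. The out-degree of a vertex is its number of children. $M_n$ denotes the maximal out-degree among the vertices of generation $n$ (with $M_n=0$ if generation $n$ is empty). The distribution $p$ is called unbounded if the set $\{r:p_r>0\}$ is unbounded. *)

theory Defs
  imports "HOL-Probability.Probability"
begin

text \<open>Galton-Watson tree via the Ulam-Harris construction: every potential vertex
  v (a finite list of child indices) carries an independent offspring number
  omega v with law p; the tree consists of the v whose every step stays below the
  offspring count of the parent.\<close>

definition gw_space :: "nat pmf \<Rightarrow> (nat list \<Rightarrow> nat) measure" where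
  "gw_space p = PiM UNIV (\<lambda>_. measure_pmf p)"

definition gw_tree :: "(nat list \<Rightarrow> nat) \<Rightarrow> nat list set" where
  "gw_tree \<omega> = {v. \<forall>j < length v. v ! j < \<omega> (take j v)}"

definition gen_max :: "(nat list \<Rightarrow> nat) \<Rightarrow> nat \<Rightarrow> nat" where
  "gen_max \<omega> n = Max (insert 0 (\<omega> ` {v \<in> gw_tree \<omega>. length v = n}))"

definition gw_mean :: "nat pmf \<Rightarrow> real" where
  "gw_mean p = measure_pmf.expectation p real"

end

theory Submission
  imports Defs
begin


lemma space_gw[simp]: "space (gw_space p) = UNIV"
  by (simp add: gw_space_def space_PiM)

lemma sets_gw_coord[measurable]: "(\<lambda>\<omega>. \<omega> x) \<in> measurable (gw_space p) (count_space UNIV)"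
proof -
  have "(\<lambda>\<omega>. \<omega> x) \<in> measurable (gw_space p) (measure_pmf p)"
    unfolding gw_space_def by (rule measurable_component_singleton) simp
  then show ?thesis by (simp add: measurable_def)
qed

lemma pred_coord[measurable]: "Measurable.pred (gw_space p) (\<lambda>\<omega>. P (\<omega> x))"
  using measurable_compose[OF sets_gw_coord[where p=p and x=x], of "\<lambda>y. P y" "count_space UNIV"] by simp

lemma prob_gw: "prob_space (gw_space p)"
  unfolding gw_space_def by (intro prob_space_PiM prob_space_measure_pmf)

definition inT :: "nat list \<Rightarrow> (nat list \<Rightarrow> nat) \<Rightarrow> bool" where
  "inT v \<omega> \<longleftrightarrow> (\<forall>j < length v. v ! j < \<omega> (take j v))"

lemma pred_gw: "Measurable.pred (gw_space p) P \<Longrightarrow> {\<omega>. P \<omega>} \<in> sets (gw_space p)"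
proof -
  assume [measurable]: "Measurable.pred (gw_space p) P"
  have "{\<omega> \<in> space (gw_space p). P \<omega>} \<in> sets (gw_space p)" by measurable
  then show ?thesis by simp
qed

lemma pred_inT[measurable]: "Measurable.pred (gw_space p) (inT v)"
  unfolding inT_def by measurable

lemma test1: "Measurable.pred (gw_space p) (\<lambda>\<omega>. \<exists>u::nat list. u \<noteq> v \<and> inT u \<omega> \<and> ((length u = n \<and> 3 \<le> \<omega> u) \<or> (\<exists>j\<in>{1..m::nat}. length u = f j \<and> g j \<le> \<omega> u)))"
  by measurable

lemma factor:
  assumes S: "S \<in> sets (gw_space p)" and ind: "\<And>f y. f(v:=y) \<in> S \<longleftrightarrow> f \<in> S"
  shows "emeasure (gw_space p) (S \<inter> {\<omega>. \<omega> v \<in> R}) = emeasure (gw_space p) S * emeasure (measure_pmf p) R"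
proof -
  define Q where "Q = PiM (UNIV - {v}) (\<lambda>_. measure_pmf p)"
  define \<phi> where "\<phi> = (\<lambda>(x::nat, X::nat list \<Rightarrow> nat). X(v:=x))"
  have ins: "insert v (UNIV - {v}) = UNIV" by auto
  have eq: "distr (measure_pmf p \<Otimes>\<^sub>M Q) (gw_space p) \<phi> = gw_space p"
    using distr_pair_PiM_eq_PiM[of "UNIV - {v}" "\<lambda>_. measure_pmf p" v]
    unfolding gw_space_def Q_def \<phi>_def ins by (simp add: prob_space_measure_pmf)
  interpret Q: prob_space Q unfolding Q_def by (intro prob_space_PiM prob_space_measure_pmf)
  have mphi: "\<phi> \<in> measurable (measure_pmf p \<Otimes>\<^sub>M Q) (gw_space p)"
    unfolding \<phi>_def gw_space_def Q_def split_beta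
    by (rule measurable_fun_upd[where J="UNIV - {v}"]) auto
  have m0: "(\<lambda>X. X(v:=0)) \<in> measurable Q (gw_space p)"
    unfolding gw_space_def Q_def
    by (rule measurable_fun_upd[where J="UNIV - {v}"]) auto
  define S' where "S' = (\<lambda>X. X(v:=0)) -` S \<inter> space Q"
  have S': "S' \<in> sets Q" unfolding S'_def using m0 S by (rule measurable_sets)
  have E: "emeasure (gw_space p) A = emeasure (measure_pmf p \<Otimes>\<^sub>M Q) (\<phi> -` A \<inter> space (measure_pmf p \<Otimes>\<^sub>M Q))"
    if "A \<in> sets (gw_space p)" for A
  proof -
    have "emeasure (gw_space p) A = emeasure (distr (measure_pmf p \<Otimes>\<^sub>M Q) (gw_space p) \<phi>) A"
      by (simp add: eq)
    also have "\<dots> = emeasure (measure_pmf p \<Otimes>\<^sub>M Q) (\<phi> -` A \<inter> space (measure_pmf p \<Otimes>\<^sub>M Q))"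
      using that mphi by (simp add: emeasure_distr)
    finally show ?thesis .
  qed
  have key: "\<phi> -` (S \<inter> {\<omega>. \<omega> v \<in> R'}) \<inter> space (measure_pmf p \<Otimes>\<^sub>M Q) = R' \<times> S'" for R'
  proof -
    have h: "X(v:=x) \<in> S \<longleftrightarrow> X(v:=0) \<in> S" for X x
      using ind[of "X(v:=x)" 0] by simp
    have "z \<in> \<phi> -` (S \<inter> {\<omega>. \<omega> v \<in> R'}) \<inter> space (measure_pmf p \<Otimes>\<^sub>M Q) \<longleftrightarrow> z \<in> R' \<times> S'" for z
    proof (cases z)
      case (Pair x X) then show ?thesis using h[of X x] by (auto simp: \<phi>_def S'_def space_pair_measure)
    qed
    then show ?thesis by blast
  qed
  have S2: "S \<inter> {\<omega>. \<omega> v \<in> R'} \<in> sets (gw_space p)" for R'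
    using S by (intro sets.Int pred_gw pred_coord)
  have "emeasure (gw_space p) (S \<inter> {\<omega>. \<omega> v \<in> R}) = emeasure (measure_pmf p) R * emeasure Q S'"
    using E[OF S2] key Q.emeasure_pair_measure_Times[of R "measure_pmf p" S'] S' by simp
  moreover have "emeasure (gw_space p) S = emeasure Q S'"
    using E[OF S2[of UNIV]] key[of UNIV] Q.emeasure_pair_measure_Times[of UNIV "measure_pmf p" S'] S'
    by (simp add: measure_pmf.emeasure_space_1[simplified])
  ultimately show ?thesis by (simp add: mult.commute)
qed

definition W :: "nat \<Rightarrow> nat list set" where "W d = {v. length v = d}"

lemma countable_W[simp]: "countable (W d)"
  by (rule countable_subset[OF subset_UNIV]) simp

lemma W0[simp]: "W 0 = {[]}" by (auto simp: W_def)

lemma sum_W_Suc: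
  "(\<integral>\<^sup>+x. f x \<partial>count_space (W (Suc d))) = (\<integral>\<^sup>+c. \<integral>\<^sup>+y. f (c#y) \<partial>count_space (W d) \<partial>count_space UNIV)"
proof -
  interpret sf: sigma_finite_measure "count_space (W d)"
    by (rule sigma_finite_measure_count_space_countable) simp
  have "(\<integral>\<^sup>+c. \<integral>\<^sup>+y. f (c#y) \<partial>count_space (W d) \<partial>count_space UNIV)
      = (\<integral>\<^sup>+z. f (fst z # snd z) \<partial>(count_space UNIV \<Otimes>\<^sub>M count_space (W d)))"
    by (subst sf.nn_integral_fst[symmetric]) (auto simp: pair_measure_countable)
  also have "\<dots> = (\<integral>\<^sup>+z. f (fst z # snd z) \<partial>count_space (UNIV \<times> W d))"
    by (simp add: pair_measure_countable)
  also have "\<dots> = (\<integral>\<^sup>+x. f x \<partial>count_space (W (Suc d)))"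
  proof (rule nn_integral_bij_count_space[where g="\<lambda>z. fst z # snd z"])
    show "bij_betw (\<lambda>z. fst z # snd z) (UNIV \<times> W d) (W (Suc d))"
      by (rule bij_betwI[where g="\<lambda>x. (hd x, tl x)"]) (auto simp: W_def length_Suc_conv)
  qed
  finally show ?thesis ..
qed

lemma inT_Nil[simp]: "inT [] f" by (simp add: inT_def)

lemma inT_snoc: "inT (v@[c]) f \<longleftrightarrow> inT v f \<and> c < f v"
  by (auto simp: inT_def nth_append less_Suc_eq)

lemma inT_append: "inT (v@x) f \<Longrightarrow> inT v f"
  unfolding inT_def
proof (intro allI impI)
  fix j assume h: "\<forall>j<length (v @ x). (v @ x) ! j < f (take j (v @ x))" and j: "j < length v"
  then show "v ! j < f (take j v)" using h[rule_format, of j] by (simp add: nth_append)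
qed

lemma inT_upd: "\<not>(\<exists>x. x \<noteq> [] \<and> u = w@x) \<Longrightarrow> inT u (f(w:=y)) \<longleftrightarrow> inT u f"
  unfolding inT_def
proof (intro iffI allI impI)
  fix j assume h: "\<not>(\<exists>x. x \<noteq> [] \<and> u = w@x)" and j: "j < length u"
  then have "take j u \<noteq> w"
    by (metis Nil_is_append_conv append_take_drop_id drop_eq_Nil leD)
  then have "(f(w:=y)) (take j u) = f (take j u)" by simp
  moreover assume "\<forall>j<length u. u ! j < (f(w := y)) (take j u)" 
  ultimately show "u ! j < f (take j u)" using j by metis
next
  fix j assume h: "\<not>(\<exists>x. x \<noteq> [] \<and> u = w@x)" and j: "j < length u"
  then have "take j u \<noteq> w"
    by (metis Nil_is_append_conv append_take_drop_id drop_eq_Nil leD)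
  then have "(f(w:=y)) (take j u) = f (take j u)" by simp
  moreover assume "\<forall>j<length u. u ! j < f (take j u)" 
  ultimately show "u ! j < (f(w := y)) (take j u)" using j by metis
qed

lemma sum_tail:
  assumes "integrable (measure_pmf p) real"
  shows "(\<integral>\<^sup>+c. emeasure (measure_pmf p) {c<..} \<partial>count_space UNIV) = ennreal (gw_mean p)"
proof -
  have "(\<integral>\<^sup>+c. emeasure (measure_pmf p) {c<..} \<partial>count_space UNIV) = (\<Sum>c. emeasure (measure_pmf p) {x \<in> space (measure_pmf p). enat c < enat x})"
    by (simp add: nn_integral_count_space_nat greaterThan_def)
  also have "\<dots> = (\<integral>\<^sup>+x. ennreal_of_enat (enat x) \<partial>measure_pmf p)"
    by (rule nn_integral_enat_function[symmetric]) simp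
  also have "\<dots> = (\<integral>\<^sup>+x. ennreal (real x) \<partial>measure_pmf p)"
    by (simp add: ennreal_of_nat_eq_real_of_nat)
  also have "\<dots> = ennreal (gw_mean p)"
    unfolding gw_mean_def using assms by (intro nn_integral_eq_integral) auto
  finally show ?thesis .
qed

lemma mean_nonneg: "gw_mean p \<ge> 0"
  unfolding gw_mean_def by (rule integral_nonneg_AE) auto

lemma inT_sets[measurable]: "{f. inT v f} \<in> sets (gw_space p)"
  by (intro pred_gw) measurable

lemma sumD:
  assumes mf: "integrable (measure_pmf p) real"
  shows "S \<in> sets (gw_space p) \<Longrightarrow> (\<And>x f y. f(w@x := y) \<in> S \<longleftrightarrow> f \<in> S) \<Longrightarrow>
    (\<integral>\<^sup>+x. emeasure (gw_space p) ({f. inT (w@x) f} \<inter> S) \<partial>count_space (W d))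
     = ennreal (gw_mean p ^ d) * emeasure (gw_space p) ({f. inT w f} \<inter> S)"
proof (induction d arbitrary: w)
  case 0
  then show ?case by (simp add: nn_integral_count_space_finite)
next
  case (Suc d)
  have S[measurable]: "S \<in> sets (gw_space p)" by fact
  have "(\<integral>\<^sup>+x. emeasure (gw_space p) ({f. inT (w@x) f} \<inter> S) \<partial>count_space (W (Suc d)))
     = (\<integral>\<^sup>+c. \<integral>\<^sup>+y. emeasure (gw_space p) ({f. inT ((w@[c])@y) f} \<inter> S) \<partial>count_space (W d) \<partial>count_space UNIV)"
    by (simp add: sum_W_Suc)
  also have "\<dots> = (\<integral>\<^sup>+c. ennreal (gw_mean p ^ d) * emeasure (gw_space p) ({f. inT (w@[c]) f} \<inter> S) \<partial>count_space UNIV)"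
  proof (rule nn_integral_cong)
    fix c
    show "(\<integral>\<^sup>+y. emeasure (gw_space p) ({f. inT ((w@[c])@y) f} \<inter> S) \<partial>count_space (W d)) =
      ennreal (gw_mean p ^ d) * emeasure (gw_space p) ({f. inT (w@[c]) f} \<inter> S)"
      by (rule Suc.IH[OF S]) (metis Suc.prems(2) append_Cons append_assoc self_append_conv2)
  qed
  also have "\<dots> = (\<integral>\<^sup>+c. ennreal (gw_mean p ^ d) * (emeasure (gw_space p) ({f. inT w f} \<inter> S) * emeasure (measure_pmf p) {c<..}) \<partial>count_space UNIV)"
  proof (rule nn_integral_cong)
    fix c
    have eq: "{f. inT (w@[c]) f} \<inter> S = ({f. inT w f} \<inter> S) \<inter> {f. f w \<in> {c<..}}"
      by (auto simp: inT_snoc)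
    have "emeasure (gw_space p) (({f. inT w f} \<inter> S) \<inter> {f. f w \<in> {c<..}}) = emeasure (gw_space p) ({f. inT w f} \<inter> S) * emeasure (measure_pmf p) {c<..}"
    proof (rule factor)
      show "{f. inT w f} \<inter> S \<in> sets (gw_space p)" by measurable
      fix f y
      have "inT w (f(w:=y)) = inT w f" by (rule inT_upd) simp
      moreover have "f(w@[] := y) \<in> S \<longleftrightarrow> f \<in> S" by (rule Suc.prems(2))
      ultimately show "f(w:=y) \<in> {f. inT w f} \<inter> S \<longleftrightarrow> f \<in> {f. inT w f} \<inter> S" by simp
    qed
    then show "ennreal (gw_mean p ^ d) * emeasure (gw_space p) ({f. inT (w@[c]) f} \<inter> S) =
       ennreal (gw_mean p ^ d) * (emeasure (gw_space p) ({f. inT w f} \<inter> S) * emeasure (measure_pmf p) {c<..})"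
      by (simp add: eq)
  qed
  also have "\<dots> = ennreal (gw_mean p ^ d) * emeasure (gw_space p) ({f. inT w f} \<inter> S) * (\<integral>\<^sup>+c. emeasure (measure_pmf p) {c<..} \<partial>count_space UNIV)"
    by (simp add: nn_integral_cmult mult.assoc)
  also have "\<dots> = ennreal (gw_mean p ^ Suc d) * emeasure (gw_space p) ({f. inT w f} \<inter> S)"
    using mean_nonneg[of p] by (simp add: sum_tail[OF mf] ennreal_mult' mult_ac)
  finally show ?case .
qed

lemma gw_tree_inT: "gw_tree f = {v. inT v f}" by (simp add: gw_tree_def inT_def)

lemma finite_gen: "finite {v. inT v f \<and> length v = n}"
proof (induction n)
  case 0
  have "{v. inT v f \<and> length v = 0} \<subseteq> {[]}" by auto
  then show ?case by (rule finite_subset) simp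
next
  case (Suc n)
  have "{v. inT v f \<and> length v = Suc n} \<subseteq> (\<Union>u\<in>{v. inT v f \<and> length v = n}. (\<lambda>c. u@[c]) ` {..<f u})"
  proof
    fix v assume v: "v \<in> {v. inT v f \<and> length v = Suc n}"
    then have "v \<noteq> []" by auto
    then have eq: "v = butlast v @ [last v]" by simp
    with v have "inT (butlast v) f \<and> last v < f (butlast v)" using inT_snoc[of "butlast v" "last v" f] by simp
    with v eq show "v \<in> (\<Union>u\<in>{v. inT v f \<and> length v = n}. (\<lambda>c. u@[c]) ` {..<f u})"
      by (auto intro!: bexI[of _ "butlast v"] image_eqI[of _ _ "last v"])
  qed
  then show ?case by (rule finite_subset) (auto intro: Suc.IH)
qed

definition GE :: "nat \<Rightarrow> nat \<Rightarrow> (nat list \<Rightarrow> nat) \<Rightarrow> bool" where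
  "GE n t f \<longleftrightarrow> (\<exists>v. length v = n \<and> inT v f \<and> t \<le> f v)"

lemma GE_sets[measurable]: "{f. GE n t f} \<in> sets (gw_space p)"
  unfolding GE_def by (intro pred_gw) measurable

lemma gen_max_ge: "0 < r \<Longrightarrow> r \<le> gen_max f n \<longleftrightarrow> GE n r f"
proof -
  assume r: "0 < r"
  have fin: "finite (insert 0 (f ` {v \<in> gw_tree f. length v = n}))"
    using finite_gen[of f n] by (simp add: gw_tree_inT)
  have "r \<le> gen_max f n \<longleftrightarrow> (\<exists>a\<in>insert 0 (f ` {v \<in> gw_tree f. length v = n}). r \<le> a)"
    unfolding gen_max_def using fin by (rule Max_ge_iff) simp
  also have "\<dots> \<longleftrightarrow> GE n r f" using r by (auto simp: GE_def gw_tree_inT)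
  finally show ?thesis .
qed

lemma gen_max_eq: "0 < r \<Longrightarrow> gen_max f n = r \<longleftrightarrow> GE n r f \<and> \<not> GE n (Suc r) f"
  using gen_max_ge[of r f n] gen_max_ge[of "Suc r" f n] by auto

lemma gen_max_less: "0 < r \<Longrightarrow> gen_max f n < r \<longleftrightarrow> \<not> GE n r f"
  using gen_max_ge[of r f n] by auto

lemma single_le_nn_integral: "j \<in> I \<Longrightarrow> f j \<le> (\<integral>\<^sup>+i. f i \<partial>count_space I)"
proof -
  assume j: "j \<in> I"
  have "(\<integral>\<^sup>+i. f i \<partial>count_space I) = (\<integral>\<^sup>+i. f i * indicator I i \<partial>count_space UNIV)"
    by (rule nn_integral_count_space_indicator) simp
  also have "\<dots> \<ge> (\<integral>\<^sup>+i. f i * indicator {j} i \<partial>count_space UNIV)"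
    using j by (intro nn_integral_mono) (auto simp: indicator_def)
  also have "(\<integral>\<^sup>+i. f i * indicator {j} i \<partial>count_space UNIV) = f j"
    by (subst nn_integral_indicator_finite) (auto simp: mult_ac)
  finally show ?thesis .
qed

lemma UN_bound:
  assumes I: "countable I" and X[measurable]: "\<And>i. i \<in> I \<Longrightarrow> X i \<in> sets M"
  shows "emeasure M (\<Union>i\<in>I. X i) \<le> (\<integral>\<^sup>+i. emeasure M (X i) \<partial>count_space I)"
proof -
  have U: "(\<Union>i\<in>I. X i) \<in> sets M" using I X by (intro sets.countable_UN'') auto
  have "emeasure M (\<Union>i\<in>I. X i) = (\<integral>\<^sup>+x. indicator (\<Union>i\<in>I. X i) x \<partial>M)"
    using U by simp
  also have "\<dots> \<le> (\<integral>\<^sup>+x. \<integral>\<^sup>+i. indicator (X i) x \<partial>count_space I \<partial>M)"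
  proof (rule nn_integral_mono)
    fix x
    show "indicator (\<Union>i\<in>I. X i) x \<le> (\<integral>\<^sup>+i. indicator (X i) x \<partial>count_space I :: ennreal)"
    proof (cases "x \<in> (\<Union>i\<in>I. X i)")
      case True
      then obtain j where "j \<in> I" "x \<in> X j" by auto
      then show ?thesis using single_le_nn_integral[of j I "\<lambda>i. indicator (X i) x :: ennreal"] True by simp
    qed simp
  qed
  also have "\<dots> = (\<integral>\<^sup>+i. \<integral>\<^sup>+x. indicator (X i) x \<partial>M \<partial>count_space I)"
    using I by (intro nn_integral_count_space_nn_integral) auto
  also have "\<dots> = (\<integral>\<^sup>+i. emeasure M (X i) \<partial>count_space I)"
    by (intro nn_integral_cong_simp) auto
  finally show ?thesis .
qed

lemma P_inT_coord:
  "emeasure (gw_space p) ({f. inT v f} \<inter> {f. f v \<in> R}) = emeasure (gw_space p) {f. inT v f} * emeasure (measure_pmf p) R"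
  by (rule factor) (auto simp: inT_upd)

lemma sum_inT:
  assumes mf: "integrable (measure_pmf p) real"
  shows "(\<integral>\<^sup>+v. emeasure (gw_space p) {f. inT v f} \<partial>count_space (W n)) = ennreal (gw_mean p ^ n)"
proof -
  have U: "UNIV \<in> sets (gw_space p)" using sets.top[of "gw_space p"] by simp
  have "emeasure (gw_space p) UNIV = 1"
    using prob_space.emeasure_space_1[OF prob_gw, of p] by simp
  then show ?thesis using sumD[OF mf U, of "[]" n] by simp
qed

lemma sum_inT_coord:
  assumes mf: "integrable (measure_pmf p) real"
  shows "(\<integral>\<^sup>+v. emeasure (gw_space p) ({f. inT v f} \<inter> {f. f v \<in> R}) \<partial>count_space (W n))
     = ennreal (gw_mean p ^ n) * emeasure (measure_pmf p) R"
  by (simp add: P_inT_coord nn_integral_multc sum_inT[OF mf])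

lemma union_coord_bound:
  assumes mf: "integrable (measure_pmf p) real"
  assumes sub: "A \<subseteq> (\<Union>v\<in>W n. {f. inT v f} \<inter> {f. f v \<in> R})"
  shows "emeasure (gw_space p) A \<le> ennreal (gw_mean p ^ n) * emeasure (measure_pmf p) R"
proof -
  have "emeasure (gw_space p) A \<le> emeasure (gw_space p) (\<Union>v\<in>W n. {f. inT v f} \<inter> {f. f v \<in> R})"
    using sub by (intro emeasure_mono sets.countable_UN'') (auto intro!: sets.Int pred_gw pred_coord)
  also have "\<dots> \<le> (\<integral>\<^sup>+v. emeasure (gw_space p) ({f. inT v f} \<inter> {f. f v \<in> R}) \<partial>count_space (W n))"
    by (intro UN_bound) (auto intro!: sets.Int pred_gw pred_coord)
  finally show ?thesis by (simp add: sum_inT_coord[OF mf])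
qed

lemma GE_bound:
  assumes mf: "integrable (measure_pmf p) real"
  shows "emeasure (gw_space p) {f. GE n t f} \<le> ennreal (gw_mean p ^ n) * emeasure (measure_pmf p) {t..}"
  by (rule union_coord_bound[OF mf]) (auto simp: GE_def W_def)

lemma upper_bound:
  assumes mf: "integrable (measure_pmf p) real" and r: "0 < r"
  shows "emeasure (gw_space p) {f. gen_max f n = r \<and> Q f} \<le> ennreal (gw_mean p ^ n) * ennreal (pmf p r)"
proof -
  have "emeasure (gw_space p) {f. gen_max f n = r \<and> Q f} \<le> ennreal (gw_mean p ^ n) * emeasure (measure_pmf p) {r}"
  proof (rule union_coord_bound[OF mf], rule subsetI)
    fix f assume "f \<in> {f. gen_max f n = r \<and> Q f}"
    then have "gen_max f n = r" by simp
    then have "GE n r f" "\<not> GE n (Suc r) f" using gen_max_eq[OF r] by auto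
    then obtain v where "length v = n" "inT v f" "f v = r" unfolding GE_def by force
    then show "f \<in> (\<Union>v\<in>W n. {f. inT v f} \<inter> {f. f v \<in> {r}})" by (auto simp: W_def)
  qed
  then show ?thesis by (simp add: emeasure_pmf_single)
qed

lemma desc_bound:
  assumes mf: "integrable (measure_pmf p) real"
  shows "emeasure (gw_space p) ({f. f v \<in> {r}} \<inter> {f. \<exists>x\<in>W (Suc d). inT (v@x) f \<and> t \<le> f (v@x)})
    \<le> emeasure (gw_space p) {f. inT v f} * ennreal (pmf p r) * of_nat r * ennreal (gw_mean p ^ d) * emeasure (measure_pmf p) {t..}"
proof -
  let ?P = "emeasure (gw_space p)"
  let ?X = "\<lambda>x. ({f. f v \<in> {r}} \<inter> {f. inT (v@x) f}) \<inter> {f. f (v@x) \<in> {t..}}"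
  have "?P ({f. f v \<in> {r}} \<inter> {f. \<exists>x\<in>W (Suc d). inT (v@x) f \<and> t \<le> f (v@x)}) = ?P (\<Union>x\<in>W (Suc d). ?X x)"
    by (intro arg_cong[where f="?P"]) auto
  also have "\<dots> \<le> (\<integral>\<^sup>+x. ?P (?X x) \<partial>count_space (W (Suc d)))"
    by (intro UN_bound) (auto intro!: sets.Int pred_gw pred_coord)
  also have "\<dots> = (\<integral>\<^sup>+x. ?P ({f. f v \<in> {r}} \<inter> {f. inT (v@x) f}) * emeasure (measure_pmf p) {t..} \<partial>count_space (W (Suc d)))"
  proof (rule nn_integral_cong)
    fix x assume "x \<in> space (count_space (W (Suc d)))"
    then have x: "x \<noteq> []" by (auto simp: W_def)
    show "?P (?X x) = ?P ({f. f v \<in> {r}} \<inter> {f. inT (v@x) f}) * emeasure (measure_pmf p) {t..}"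
    proof (rule factor)
      show "{f. f v \<in> {r}} \<inter> {f. inT (v@x) f} \<in> sets (gw_space p)"
        by (auto intro!: sets.Int pred_gw pred_coord)
      fix f y
      have "v \<noteq> v@x" using x by simp
      moreover have "inT (v@x) (f(v@x:=y)) = inT (v@x) f" by (rule inT_upd) simp
      ultimately show "f(v@x := y) \<in> {f. f v \<in> {r}} \<inter> {f. inT (v@x) f} \<longleftrightarrow> f \<in> {f. f v \<in> {r}} \<inter> {f. inT (v@x) f}"
        by simp
    qed
  qed
  also have "\<dots> = emeasure (measure_pmf p) {t..} * (\<integral>\<^sup>+c. \<integral>\<^sup>+y. ?P ({f. inT ((v@[c])@y) f} \<inter> {f. f v \<in> {r}}) \<partial>count_space (W d) \<partial>count_space UNIV)"
    by (subst nn_integral_multc, simp, subst sum_W_Suc) (simp add: Int_commute mult.commute)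
  also have "\<dots> = emeasure (measure_pmf p) {t..} * (\<integral>\<^sup>+c. ennreal (gw_mean p ^ d) * ?P ({f. inT (v@[c]) f} \<inter> {f. f v \<in> {r}}) \<partial>count_space UNIV)"
  proof (rule arg_cong2[where f="(*)"], rule refl, rule nn_integral_cong)
    fix c
    show "(\<integral>\<^sup>+y. ?P ({f. inT ((v@[c])@y) f} \<inter> {f. f v \<in> {r}}) \<partial>count_space (W d)) =
      ennreal (gw_mean p ^ d) * ?P ({f. inT (v@[c]) f} \<inter> {f. f v \<in> {r}})"
    proof (rule sumD[OF mf])
      show "{f. f v \<in> {r}} \<in> sets (gw_space p)" by (intro pred_gw pred_coord)
      fix x f y
      have "v \<noteq> (v@[c])@x" by simp
      then show "f((v@[c])@x := y) \<in> {f. f v \<in> {r}} \<longleftrightarrow> f \<in> {f. f v \<in> {r}}" by simp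
    qed
  qed
  also have "\<dots> = emeasure (measure_pmf p) {t..} * (\<integral>\<^sup>+c. (ennreal (gw_mean p ^ d) * (?P {f. inT v f} * ennreal (pmf p r))) * indicator {..<r} c \<partial>count_space UNIV)"
  proof (rule arg_cong2[where f="(*)"], rule refl, rule nn_integral_cong)
    fix c
    have "{f. inT (v@[c]) f} \<inter> {f. f v \<in> {r}} = (if c < r then {f. inT v f} \<inter> {f. f v \<in> {r}} else {})"
      by (auto simp: inT_snoc)
    then show "ennreal (gw_mean p ^ d) * ?P ({f. inT (v@[c]) f} \<inter> {f. f v \<in> {r}}) =
      (ennreal (gw_mean p ^ d) * (?P {f. inT v f} * ennreal (pmf p r))) * indicator {..<r} c"
      using P_inT_coord[where p=p and v=v and R="{r}"] by (simp add: emeasure_pmf_single)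
  qed
  also have "\<dots> = emeasure (measure_pmf p) {t..} * ((ennreal (gw_mean p ^ d) * (?P {f. inT v f} * ennreal (pmf p r))) * of_nat r)"
    by (subst nn_integral_indicator_finite) (auto simp: mult_ac)
  also have "\<dots> = ?P {f. inT v f} * ennreal (pmf p r) * of_nat r * ennreal (gw_mean p ^ d) * emeasure (measure_pmf p) {t..}"
    by (simp add: mult_ac)
  finally show ?thesis .
qed

lemma pred_GE[measurable]: "Measurable.pred (gw_space p) (GE n t)"
  unfolding GE_def by measurable



lemma lower_bound:
  fixes m :: nat and n \<rho> :: "nat \<Rightarrow> nat" and i :: nat
  assumes mf: "integrable (measure_pmf p) real"
    and i: "i \<in> {1..m}"
    and \<rho>pos: "\<forall>j\<in>{1..m}. 0 < \<rho> j"
    and ninj: "\<forall>j\<in>{1..m}. \<forall>l\<in>{1..m}. n j = n l \<longrightarrow> j = l"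
  shows "ennreal (gw_mean p ^ n i) * ennreal (pmf p (\<rho> i)) \<le>
    emeasure (gw_space p) {f. gen_max f (n i) = \<rho> i \<and> (\<forall>j\<in>{1..m}. j \<noteq> i \<longrightarrow> gen_max f (n j) < \<rho> j)}
    + ennreal (pmf p (\<rho> i)) * ((\<integral>\<^sup>+v. emeasure (gw_space p) ({f. inT v f} \<inter> {f. \<exists>j\<in>{1..m}. GE (n j) (\<rho> j) f}) \<partial>count_space (W (n i)))
       + (\<Sum>j\<in>{j\<in>{1..m}. n i < n j}. of_nat (\<rho> i) * ennreal (gw_mean p ^ (n j - 1)) * emeasure (measure_pmf p) {\<rho> j..}))"
proof -
  let ?P = "emeasure (gw_space p)"
  define n0 where "n0 = n i"
  define r0 where "r0 = \<rho> i"
  define A where "A = {f. gen_max f (n i) = \<rho> i \<and> (\<forall>j\<in>{1..m}. j \<noteq> i \<longrightarrow> gen_max f (n j) < \<rho> j)}"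
  define H where "H = {f. \<exists>j\<in>{1..m}. GE (n j) (\<rho> j) f}"
  define J where "J = {j\<in>{1..m}. n i < n j}"
  define good where "good v = {f. inT v f \<and> f v = r0 \<and> (\<forall>w. length w = n0 \<and> w \<noteq> v \<and> inT w f \<longrightarrow> f w < r0)
      \<and> (\<forall>j\<in>{1..m}. j \<noteq> i \<longrightarrow> \<not> GE (n j) (\<rho> j) f)}" for v
  define Hv where "Hv v = {f. \<exists>u. u \<noteq> v \<and> \<not>(\<exists>x. x \<noteq> [] \<and> u = v@x) \<and> inT u f \<and> (\<exists>j\<in>{1..m}. length u = n j \<and> \<rho> j \<le> f u)}" for v
  define X1 where "X1 v = ({f. inT v f} \<inter> Hv v) \<inter> {f. f v \<in> {r0}}" for v
  define X2 where "X2 v j = {f. f v \<in> {r0}} \<inter> {f. \<exists>x\<in>W (Suc (n j - n0 - 1)). inT (v@x) f \<and> \<rho> j \<le> f (v@x)}" for v j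
  have r0: "0 < r0" using \<rho>pos i by (simp add: r0_def)
  have good_sets[measurable]: "good v \<in> sets (gw_space p)" for v
    unfolding good_def by (intro pred_gw) measurable
  have Hv_sets[measurable]: "Hv v \<in> sets (gw_space p)" for v
    unfolding Hv_def by (intro pred_gw) measurable
  have H_sets[measurable]: "H \<in> sets (gw_space p)"
    unfolding H_def by (intro pred_gw) measurable
  have X1_sets[measurable]: "X1 v \<in> sets (gw_space p)" for v
    unfolding X1_def by (intro sets.Int pred_gw pred_coord) measurable
  have X2_sets[measurable]: "X2 v j \<in> sets (gw_space p)" for v j
    unfolding X2_def by (intro sets.Int pred_gw pred_coord) measurable
  have A_sets: "A \<in> sets (gw_space p)"
  proof -
    have "A = {f. GE (n i) (\<rho> i) f \<and> \<not> GE (n i) (Suc (\<rho> i)) f \<and> (\<forall>j\<in>{1..m}. j \<noteq> i \<longrightarrow> \<not> GE (n j) (\<rho> j) f)}"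
      unfolding A_def using gen_max_eq[of "\<rho> i"] gen_max_less \<rho>pos i by auto
    also have "\<dots> \<in> sets (gw_space p)" by (intro pred_gw) measurable
    finally show ?thesis .
  qed
  have good_A: "(\<Union>v\<in>W n0. good v) \<subseteq> A"
  proof safe
    fix v f assume v: "v \<in> W n0" and f: "f \<in> good v"
    have "GE n0 r0 f" using v f by (auto simp: good_def GE_def W_def)
    moreover have "\<not> GE n0 (Suc r0) f"
    proof
      assume "GE n0 (Suc r0) f"
      then obtain w where w: "length w = n0" "inT w f" "Suc r0 \<le> f w" by (auto simp: GE_def)
      with f have "w \<noteq> v" by (auto simp: good_def)
      with w f show False by (auto simp: good_def)
    qed
    ultimately have "gen_max f n0 = r0" using gen_max_eq[OF r0] by simp
    moreover have "gen_max f (n j) < \<rho> j" if "j \<in> {1..m}" "j \<noteq> i" for j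
      using f that gen_max_less[of "\<rho> j" f "n j"] \<rho>pos by (auto simp: good_def)
    ultimately show "f \<in> A" by (auto simp: A_def n0_def r0_def)
  qed
  have disj: "disjoint_family_on good (W n0)"
    unfolding disjoint_family_on_def good_def W_def by auto
  have sum_good: "(\<integral>\<^sup>+v. ?P (good v) \<partial>count_space (W n0)) \<le> ?P A"
  proof -
    have "(\<integral>\<^sup>+v. ?P (good v) \<partial>count_space (W n0)) = ?P (\<Union>v\<in>W n0. good v)"
      by (rule emeasure_UN_countable[symmetric]) (auto simp: disj)
    also have "\<dots> \<le> ?P A" using good_A A_sets by (rule emeasure_mono)
    finally show ?thesis .
  qed
  have cover: "{f. inT v f} \<inter> {f. f v \<in> {r0}} \<subseteq> good v \<union> (X1 v \<union> (\<Union>j\<in>J. X2 v j))" if v: "v \<in> W n0" for v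
  proof
    fix f assume f: "f \<in> {f. inT v f} \<inter> {f. f v \<in> {r0}}"
    show "f \<in> good v \<union> (X1 v \<union> (\<Union>j\<in>J. X2 v j))"
    proof (cases "f \<in> good v")
      case False
      then consider (a) w where "length w = n0" "w \<noteq> v" "inT w f" "\<not> f w < r0"
        | (b) j where "j \<in> {1..m}" "j \<noteq> i" "GE (n j) (\<rho> j) f"
        using f by (auto simp: good_def)
      then show ?thesis
      proof cases
        case a
        then have "\<not>(\<exists>x. x \<noteq> [] \<and> w = v@x)" using v by (auto simp: W_def)
        then have "f \<in> Hv v" using a i unfolding Hv_def r0_def n0_def by (auto intro!: exI[of _ w] bexI[of _ i])
        then show ?thesis using f by (auto simp: X1_def)
      next
        case b
        then obtain u where u: "length u = n j" "inT u f" "\<rho> j \<le> f u" by (auto simp: GE_def)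
        show ?thesis
        proof (cases "\<exists>x. x \<noteq> [] \<and> u = v@x")
          case True
          then obtain x where x: "x \<noteq> []" "u = v@x" by auto
          then have "n0 < n j" using u v by (auto simp: W_def) (metis length_greater_0_conv less_add_same_cancel1)
          then have "j \<in> J" using b by (auto simp: J_def n0_def)
          moreover have "x \<in> W (Suc (n j - n0 - 1))" using x u v \<open>n0 < n j\<close> by (auto simp: W_def)
          ultimately have "f \<in> X2 v j" using f x u unfolding X2_def by auto
          then show ?thesis using \<open>j \<in> J\<close> by auto
        next
          case False
          have "u \<noteq> v"
          proof
            assume "u = v"
            then have "n j = n i" using u v by (auto simp: W_def n0_def)
            then show False using ninj b(1) b(2) i by metis
          qed
          have "\<exists>j\<in>{1..m}. length u = n j \<and> \<rho> j \<le> f u" using u(1) u(3) b(1) by blast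
          then have "f \<in> Hv v" using False u \<open>u \<noteq> v\<close> unfolding Hv_def mem_Collect_eq
            by blast
          then show ?thesis using f by (auto simp: X1_def)
        qed
      qed
    qed simp
  qed
  have pt: "?P ({f. inT v f} \<inter> {f. f v \<in> {r0}}) \<le> ?P (good v) + (?P (X1 v) + (\<Sum>j\<in>J. ?P (X2 v j)))"
    if v: "v \<in> W n0" for v
  proof -
    have "?P ({f. inT v f} \<inter> {f. f v \<in> {r0}}) \<le> ?P (good v \<union> (X1 v \<union> (\<Union>j\<in>J. X2 v j)))"
      using cover[OF v] by (intro emeasure_mono) auto
    also have "\<dots> \<le> ?P (good v) + ?P (X1 v \<union> (\<Union>j\<in>J. X2 v j))"
      by (intro emeasure_subadditive) auto
    also have "?P (X1 v \<union> (\<Union>j\<in>J. X2 v j)) \<le> ?P (X1 v) + ?P (\<Union>j\<in>J. X2 v j)"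
      by (intro emeasure_subadditive) auto
    also have "?P (\<Union>j\<in>J. X2 v j) \<le> (\<Sum>j\<in>J. ?P (X2 v j))"
      by (intro emeasure_subadditive_finite) (auto simp: J_def)
    finally show ?thesis by (simp add: add_mono)
  qed
  have X1_eq: "?P (X1 v) = ?P ({f. inT v f} \<inter> Hv v) * emeasure (measure_pmf p) {r0}" for v
    unfolding X1_def
  proof (rule factor)
    show "{f. inT v f} \<inter> Hv v \<in> sets (gw_space p)" by measurable
    fix f y
    have "inT v (f(v:=y)) = inT v f" by (rule inT_upd) simp
    moreover have "f(v:=y) \<in> Hv v \<longleftrightarrow> f \<in> Hv v"
    proof -
      have "inT u (f(v:=y)) = inT u f \<and> (f(v:=y)) u = f u" if "u \<noteq> v" "\<not>(\<exists>x. x \<noteq> [] \<and> u = v@x)" for u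
        using that inT_upd[of u v f y] by simp
      then have eqv: "(u \<noteq> v \<and> \<not>(\<exists>x. x \<noteq> [] \<and> u = v@x) \<and> inT u (f(v:=y)) \<and> (\<exists>j\<in>{1..m}. length u = n j \<and> \<rho> j \<le> (f(v:=y)) u))
          \<longleftrightarrow> (u \<noteq> v \<and> \<not>(\<exists>x. x \<noteq> [] \<and> u = v@x) \<and> inT u f \<and> (\<exists>j\<in>{1..m}. length u = n j \<and> \<rho> j \<le> f u))" for u
        by (cases "u \<noteq> v \<and> \<not>(\<exists>x. x \<noteq> [] \<and> u = v@x)") (auto simp del: fun_upd_apply)
      show ?thesis unfolding Hv_def mem_Collect_eq by (rule ex_cong1) (rule eqv)
    qed
    ultimately show "f(v:=y) \<in> {f. inT v f} \<inter> Hv v \<longleftrightarrow> f \<in> {f. inT v f} \<inter> Hv v" by simp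
  qed
  have X1_le: "?P (X1 v) \<le> ?P ({f. inT v f} \<inter> H) * ennreal (pmf p r0)" for v
  proof -
    have "Hv v \<subseteq> H" unfolding Hv_def H_def GE_def by blast
    then have "?P ({f. inT v f} \<inter> Hv v) \<le> ?P ({f. inT v f} \<inter> H)"
      by (intro emeasure_mono) auto
    then show ?thesis by (simp add: X1_eq emeasure_pmf_single mult_right_mono)
  qed
  have X2_sum: "(\<integral>\<^sup>+v. ?P (X2 v j) \<partial>count_space (W n0)) \<le> ennreal (pmf p r0) * (of_nat r0 * ennreal (gw_mean p ^ (n j - 1)) * emeasure (measure_pmf p) {\<rho> j..})"
    if j: "j \<in> J" for j
  proof -
    define d where "d = n j - n0 - 1"
    have nd: "n0 + d = n j - 1" using j by (auto simp: J_def d_def n0_def)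
    have "(\<integral>\<^sup>+v. ?P (X2 v j) \<partial>count_space (W n0)) \<le> (\<integral>\<^sup>+v. ?P {f. inT v f} * (ennreal (pmf p r0) * of_nat r0 * ennreal (gw_mean p ^ d) * emeasure (measure_pmf p) {\<rho> j..}) \<partial>count_space (W n0))"
    proof (rule nn_integral_mono)
      fix v
      have "?P (X2 v j) \<le> ?P {f. inT v f} * ennreal (pmf p r0) * of_nat r0 * ennreal (gw_mean p ^ d) * emeasure (measure_pmf p) {\<rho> j..}"
        unfolding X2_def d_def by (rule desc_bound[OF mf])
      then show "?P (X2 v j) \<le> ?P {f. inT v f} * (ennreal (pmf p r0) * of_nat r0 * ennreal (gw_mean p ^ d) * emeasure (measure_pmf p) {\<rho> j..})"
        by (simp add: mult.assoc)
    qed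
    also have "\<dots> = ennreal (gw_mean p ^ n0) * (ennreal (pmf p r0) * of_nat r0 * ennreal (gw_mean p ^ d) * emeasure (measure_pmf p) {\<rho> j..})"
      by (simp add: nn_integral_multc sum_inT[OF mf])
    also have "\<dots> = ennreal (pmf p r0) * (of_nat r0 * ennreal (gw_mean p ^ (n j - 1)) * emeasure (measure_pmf p) {\<rho> j..})"
    proof -
      have "ennreal (gw_mean p ^ (n j - 1)) = ennreal (gw_mean p ^ n0) * ennreal (gw_mean p ^ d)"
        unfolding nd[symmetric] power_add using mean_nonneg[of p] by (simp add: ennreal_mult)
      then show ?thesis by (simp add: mult_ac)
    qed
    finally show ?thesis .
  qed
  have "ennreal (gw_mean p ^ n i) * ennreal (pmf p (\<rho> i)) = (\<integral>\<^sup>+v. ?P ({f. inT v f} \<inter> {f. f v \<in> {r0}}) \<partial>count_space (W n0))"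
    using sum_inT_coord[OF mf, where R="{r0}" and n=n0] by (simp add: emeasure_pmf_single n0_def r0_def)
  also have "\<dots> \<le> (\<integral>\<^sup>+v. ?P (good v) + (?P (X1 v) + (\<Sum>j\<in>J. ?P (X2 v j))) \<partial>count_space (W n0))"
    by (intro nn_integral_mono pt) auto
  also have "\<dots> = (\<integral>\<^sup>+v. ?P (good v) \<partial>count_space (W n0)) + ((\<integral>\<^sup>+v. ?P (X1 v) \<partial>count_space (W n0)) + (\<Sum>j\<in>J. \<integral>\<^sup>+v. ?P (X2 v j) \<partial>count_space (W n0)))"
    by (simp add: nn_integral_add nn_integral_sum)
  also have "\<dots> \<le> ?P A + ((\<integral>\<^sup>+v. ?P ({f. inT v f} \<inter> H) * ennreal (pmf p r0) \<partial>count_space (W n0))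
       + (\<Sum>j\<in>J. ennreal (pmf p r0) * (of_nat r0 * ennreal (gw_mean p ^ (n j - 1)) * emeasure (measure_pmf p) {\<rho> j..})))"
    by (intro add_mono sum_good nn_integral_mono X1_le sum_mono X2_sum)
  also have "\<dots> = ?P A + ennreal (pmf p r0) * ((\<integral>\<^sup>+v. ?P ({f. inT v f} \<inter> H) \<partial>count_space (W n0))
       + (\<Sum>j\<in>J. of_nat r0 * ennreal (gw_mean p ^ (n j - 1)) * emeasure (measure_pmf p) {\<rho> j..}))"
  proof -
    have "(\<integral>\<^sup>+v. ?P ({f. inT v f} \<inter> H) * ennreal (pmf p r0) \<partial>count_space (W n0)) = ennreal (pmf p r0) * (\<integral>\<^sup>+v. ?P ({f. inT v f} \<inter> H) \<partial>count_space (W n0))"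
      by (subst nn_integral_multc) (auto simp: mult.commute)
    then show ?thesis by (simp add: sum_distrib_left distrib_left)
  qed
  finally show ?thesis by (simp add: A_def H_def J_def n0_def r0_def)
qed



lemma emeasure_gw_real: "emeasure (gw_space p) A = ennreal (measure (gw_space p) A)"
proof -
  interpret prob_space "gw_space p" by (rule prob_gw)
  show ?thesis by (rule emeasure_eq_measure)
qed

lemma A_sets:
  fixes m :: nat and n \<rho> :: "nat \<Rightarrow> nat" and i :: nat
  assumes "\<forall>j\<in>{1..m}. 0 < \<rho> j" "i \<in> {1..m}"
  shows "{f. gen_max f (n i) = \<rho> i \<and> (\<forall>j\<in>{1..m}. j \<noteq> i \<longrightarrow> gen_max f (n j) < \<rho> j)} \<in> sets (gw_space p)"
proof -
  have "{f. gen_max f (n i) = \<rho> i \<and> (\<forall>j\<in>{1..m}. j \<noteq> i \<longrightarrow> gen_max f (n j) < \<rho> j)}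
     = {f. GE (n i) (\<rho> i) f \<and> \<not> GE (n i) (Suc (\<rho> i)) f \<and> (\<forall>j\<in>{1..m}. j \<noteq> i \<longrightarrow> \<not> GE (n j) (\<rho> j) f)}"
    using gen_max_eq[of "\<rho> i"] gen_max_less assms by auto
  also have "\<dots> \<in> sets (gw_space p)" by (intro pred_gw) measurable
  finally show ?thesis .
qed

lemma upper_real:
  assumes mf: "integrable (measure_pmf p) real" and r: "0 < r"
  shows "measure (gw_space p) {f. gen_max f n = r \<and> Q f} \<le> gw_mean p ^ n * pmf p r"
proof -
  have "ennreal (measure (gw_space p) {f. gen_max f n = r \<and> Q f}) \<le> ennreal (gw_mean p ^ n * pmf p r)"
    using upper_bound[OF mf r, of n Q] mean_nonneg[of p] by (simp add: emeasure_gw_real ennreal_mult)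
  then show ?thesis using mean_nonneg[of p] by simp
qed

lemma Dsum_finite:
  assumes mf: "integrable (measure_pmf p) real"
  shows "(\<integral>\<^sup>+v. emeasure (gw_space p) ({f. inT v f} \<inter> X) \<partial>count_space (W n)) \<le> ennreal (gw_mean p ^ n)"
proof -
  have "(\<integral>\<^sup>+v. emeasure (gw_space p) ({f. inT v f} \<inter> X) \<partial>count_space (W n)) \<le> (\<integral>\<^sup>+v. emeasure (gw_space p) {f. inT v f} \<partial>count_space (W n))"
    by (intro nn_integral_mono emeasure_mono) auto
  then show ?thesis by (simp add: sum_inT[OF mf])
qed

lemma lower_real:
  fixes m :: nat and n \<rho> :: "nat \<Rightarrow> nat" and i :: nat
  assumes mf: "integrable (measure_pmf p) real"
    and i: "i \<in> {1..m}"
    and \<rho>pos: "\<forall>j\<in>{1..m}. 0 < \<rho> j"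
    and ninj: "\<forall>j\<in>{1..m}. \<forall>l\<in>{1..m}. n j = n l \<longrightarrow> j = l"
  shows "gw_mean p ^ n i * pmf p (\<rho> i) \<le>
    measure (gw_space p) {f. gen_max f (n i) = \<rho> i \<and> (\<forall>j\<in>{1..m}. j \<noteq> i \<longrightarrow> gen_max f (n j) < \<rho> j)}
    + pmf p (\<rho> i) * (enn2real (\<integral>\<^sup>+v. emeasure (gw_space p) ({f. inT v f} \<inter> {f. \<exists>j\<in>{1..m}. GE (n j) (\<rho> j) f}) \<partial>count_space (W (n i)))
       + (\<Sum>j\<in>{j\<in>{1..m}. n i < n j}. real (\<rho> i) * gw_mean p ^ (n j - 1) * measure (measure_pmf p) {\<rho> j..}))"
    (is "?L \<le> ?M + ?p * (enn2real ?D + ?S)")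
proof -
  have mu: "0 \<le> gw_mean p" by (rule mean_nonneg)
  have Dfin: "?D < top" using Dsum_finite[OF mf] by (rule le_less_trans) simp
  have S0: "0 \<le> ?S" using mu by (intro sum_nonneg) auto
  have eqS: "(\<Sum>j\<in>{j\<in>{1..m}. n i < n j}. of_nat (\<rho> i) * ennreal (gw_mean p ^ (n j - 1)) * emeasure (measure_pmf p) {\<rho> j..}) = ennreal ?S"
  proof -
    have "(\<Sum>j\<in>{j\<in>{1..m}. n i < n j}. of_nat (\<rho> i) * ennreal (gw_mean p ^ (n j - 1)) * emeasure (measure_pmf p) {\<rho> j..})
      = (\<Sum>j\<in>{j\<in>{1..m}. n i < n j}. ennreal (real (\<rho> i) * gw_mean p ^ (n j - 1) * measure (measure_pmf p) {\<rho> j..}))"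
      using mu by (intro sum.cong refl) (simp add: ennreal_mult ennreal_of_nat_eq_real_of_nat measure_pmf.emeasure_eq_measure)
    also have "\<dots> = ennreal ?S" using mu by (intro sum_ennreal) auto
    finally show ?thesis .
  qed
  have eA: "emeasure (gw_space p) {f. gen_max f (n i) = \<rho> i \<and> (\<forall>j\<in>{1..m}. j \<noteq> i \<longrightarrow> gen_max f (n j) < \<rho> j)} = ennreal ?M"
    by (rule emeasure_gw_real)
  have eL: "ennreal ?L = ennreal (gw_mean p ^ n i) * ennreal (pmf p (\<rho> i))" using mu by (simp add: ennreal_mult)
  have "ennreal ?L \<le> ennreal ?M + ennreal ?p * (?D + ennreal ?S)"
    using lower_bound[OF mf i \<rho>pos ninj] unfolding eA eqS eL .
  also have "\<dots> = ennreal (?M + ?p * (enn2real ?D + ?S))"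
  proof -
    define D' where "D' = enn2real ?D"
    have eD: "?D = ennreal D'" using Dfin by (simp add: D'_def)
    have D'0: "0 \<le> D'" by (simp add: D'_def)
    have "ennreal ?M + ennreal ?p * (?D + ennreal ?S) = ennreal ?M + ennreal ?p * ennreal (D' + ?S)"
      unfolding eD using D'0 S0 by (simp add: ennreal_plus)
    also have "\<dots> = ennreal (?M + ?p * (D' + ?S))"
      using D'0 S0 by (simp add: ennreal_mult[symmetric] ennreal_plus[symmetric] del: ennreal_plus)
    finally show ?thesis by (simp add: D'_def)
  qed
  finally show ?thesis using S0 by (simp add: ennreal_le_iff2) (smt (verit) measure_nonneg mult_nonneg_nonneg enn2real_nonneg pmf_nonneg)
qed

lemma tail_lim:
  assumes mf: "integrable (measure_pmf p) real"
  shows "(\<lambda>t. real t * measure (measure_pmf p) {t..}) \<longlonglongrightarrow> 0"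
proof -
  define s where "s t x = real x * indicator {t..} x" for t x :: nat
  have lim: "(\<lambda>t. integral\<^sup>L (measure_pmf p) (s t)) \<longlonglongrightarrow> integral\<^sup>L (measure_pmf p) (\<lambda>x. 0::real)"
  proof (rule integral_dominated_convergence[where w=real])
    show "AE x in measure_pmf p. (\<lambda>t. s t x) \<longlonglongrightarrow> 0"
    proof (rule AE_I2)
      fix x :: nat
      have "eventually (\<lambda>t. s t x = 0) sequentially"
        using eventually_gt_at_top[of x] by eventually_elim (auto simp: s_def)
      then show "(\<lambda>t. s t x) \<longlonglongrightarrow> 0" by (rule tendsto_eventually)
    qed
    show "AE x in measure_pmf p. norm (s t x) \<le> real x" for t
      by (rule AE_I2) (auto simp: s_def indicator_def)
  qed (auto simp: mf)
  have int_s: "integrable (measure_pmf p) (s t)" for t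
    unfolding s_def using mf by (intro integrable_real_mult_indicator) auto
  have le: "real t * measure (measure_pmf p) {t..} \<le> integral\<^sup>L (measure_pmf p) (s t)" for t
  proof -
    have "real t * measure (measure_pmf p) {t..} = integral\<^sup>L (measure_pmf p) (\<lambda>x. real t * indicator {t..} x)"
      by simp
    also have "\<dots> \<le> integral\<^sup>L (measure_pmf p) (s t)"
    proof (rule integral_mono)
      show "integrable (measure_pmf p) (\<lambda>x. real t * indicator {t..} x)"
        by (intro integrable_mult_right integrable_real_indicator) (auto simp: measure_pmf.emeasure_eq_measure)
    qed (auto simp: int_s s_def indicator_def)
    finally show ?thesis .
  qed
  show ?thesis
  proof (rule tendsto_sandwich[OF _ _ tendsto_const])
    show "\<forall>\<^sub>F t in sequentially. 0 \<le> real t * measure (measure_pmf p) {t..}" by simp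
    show "\<forall>\<^sub>F t in sequentially. real t * measure (measure_pmf p) {t..} \<le> integral\<^sup>L (measure_pmf p) (s t)"
      using le by simp
    show "(\<lambda>t. integral\<^sup>L (measure_pmf p) (s t)) \<longlonglongrightarrow> 0" using lim by simp
  qed
qed

lemma tail_lim2:
  assumes mf: "integrable (measure_pmf p) real"
  shows "(\<lambda>t. measure (measure_pmf p) {t..}) \<longlonglongrightarrow> 0"
proof (rule tendsto_sandwich[OF _ _ tendsto_const tail_lim[OF mf]])
  show "\<forall>\<^sub>F t in sequentially. 0 \<le> measure (measure_pmf p) {t..}" by simp
  show "\<forall>\<^sub>F t in sequentially. measure (measure_pmf p) {t..} \<le> real t * measure (measure_pmf p) {t..}"
    using eventually_ge_at_top[of "1::nat"]
    by eventually_elim (auto intro: mult_le_cancel_right1[THEN iffD2] simp: mult_le_cancel_right1)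
qed

lemma D_lim:
  assumes mf: "integrable (measure_pmf p) real"
    and Hs: "\<And>k. H k \<in> sets (gw_space p)"
    and HP: "(\<lambda>k. measure (gw_space p) (H k)) \<longlonglongrightarrow> 0"
  shows "(\<lambda>k. enn2real (\<integral>\<^sup>+v. emeasure (gw_space p) ({f. inT v f} \<inter> H k) \<partial>count_space (W n))) \<longlonglongrightarrow> 0"
proof -
  have "(\<lambda>k. \<integral>\<^sup>+v. emeasure (gw_space p) ({f. inT v f} \<inter> H k) \<partial>count_space (W n)) \<longlonglongrightarrow> (\<integral>\<^sup>+v. 0 \<partial>count_space (W n))"
  proof (rule nn_integral_dominated_convergence[where w="\<lambda>v. emeasure (gw_space p) {f. inT v f}"])
    show "AE v in count_space (W n). emeasure (gw_space p) ({f. inT v f} \<inter> H k) \<le> emeasure (gw_space p) {f. inT v f}" for k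
      by (intro AE_I2 emeasure_mono) auto
    show "(\<integral>\<^sup>+v. emeasure (gw_space p) {f. inT v f} \<partial>count_space (W n)) < \<infinity>"
      by (simp add: sum_inT[OF mf])
    show "AE v in count_space (W n). (\<lambda>k. emeasure (gw_space p) ({f. inT v f} \<inter> H k)) \<longlonglongrightarrow> 0"
    proof (rule AE_I2)
      fix v
      have HP': "(\<lambda>k. emeasure (gw_space p) (H k)) \<longlonglongrightarrow> 0"
        using HP unfolding emeasure_gw_real by (metis ennreal_0 tendsto_ennrealI)
      show "(\<lambda>k. emeasure (gw_space p) ({f. inT v f} \<inter> H k)) \<longlonglongrightarrow> 0"
      proof (rule tendsto_sandwich[OF _ _ tendsto_const HP'])
        show "\<forall>\<^sub>F k in sequentially. 0 \<le> emeasure (gw_space p) ({f. inT v f} \<inter> H k)" by simp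
        show "\<forall>\<^sub>F k in sequentially. emeasure (gw_space p) ({f. inT v f} \<inter> H k) \<le> emeasure (gw_space p) (H k)"
          using Hs by (intro always_eventually allI emeasure_mono) auto
      qed
    qed
  qed auto
  then have "(\<lambda>k. \<integral>\<^sup>+v. emeasure (gw_space p) ({f. inT v f} \<inter> H k) \<partial>count_space (W n)) \<longlonglongrightarrow> ennreal 0"
    by simp
  then show ?thesis by (rule tendsto_enn2real) simp
qed

lemma ratio_lim:
  fixes r :: "nat \<Rightarrow> nat \<Rightarrow> nat" and m i j :: nat
  assumes mf: "integrable (measure_pmf p) real"
    and rmin: "filterlim (\<lambda>k. Min (r k ` {1..m})) at_top sequentially"
    and rpos: "\<forall>k\<ge>1. \<forall>i\<in>{1..m}. r k i > 0"
    and lim: "limsup (\<lambda>k. ereal (real (r k i) / real (Min (r k ` {i<..m})))) < \<infinity>"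
    and i: "1 \<le> i" and j: "j \<in> {i<..m}"
  shows "(\<lambda>k. real (r k i) * measure (measure_pmf p) {r k j..}) \<longlonglongrightarrow> 0"
proof -
  have "limsup (\<lambda>k. ereal (real (r k i) / real (Min (r k ` {i<..m})))) \<noteq> \<infinity>" using lim by simp
  then obtain N :: nat where C: "limsup (\<lambda>k. ereal (real (r k i) / real (Min (r k ` {i<..m})))) < ereal (real N)"
    unfolding less_PInf_Ex_of_nat by blast
  define C where "C = real N"
  have ev: "eventually (\<lambda>k. ereal (real (r k i) / real (Min (r k ` {i<..m}))) < ereal C) sequentially"
    unfolding C_def by (rule Limsup_lessD[OF C])
  have jm: "j \<in> {1..m}" using j i by auto
  have rj: "filterlim (\<lambda>k. r k j) at_top sequentially"
  proof (rule filterlim_at_top_mono[OF rmin])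
    show "\<forall>\<^sub>F k in sequentially. Min (r k ` {1..m}) \<le> r k j"
      using jm by (intro always_eventually allI Min_le) auto
  qed
  have tl: "(\<lambda>k. real (r k j) * measure (measure_pmf p) {r k j..}) \<longlonglongrightarrow> 0"
    using filterlim_compose[OF tail_lim[OF mf] rj] by simp
  show ?thesis
  proof (rule tendsto_sandwich[OF _ _ tendsto_const])
    show "\<forall>\<^sub>F k in sequentially. 0 \<le> real (r k i) * measure (measure_pmf p) {r k j..}" by simp
    show "((\<lambda>k. C * (real (r k j) * measure (measure_pmf p) {r k j..})) \<longlongrightarrow> 0) sequentially"
      using tendsto_mult_right_zero[OF tl, of C] by simp
    show "\<forall>\<^sub>F k in sequentially. real (r k i) * measure (measure_pmf p) {r k j..} \<le> C * (real (r k j) * measure (measure_pmf p) {r k j..})"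
      using ev eventually_ge_at_top[of "1::nat"]
    proof eventually_elim
      case (elim k)
      define M where "M = Min (r k ` {i<..m})"
      have ne: "{i<..m} \<noteq> {}" using j by auto
      have "M \<in> r k ` {i<..m}" unfolding M_def using ne by (intro Min_in) auto
      then have Mpos: "0 < M" using rpos elim(2) i by auto
      have Mle: "M \<le> r k j" unfolding M_def using j by (intro Min_le) auto
      have "real (r k i) / real M < C" using elim(1) by (simp add: M_def)
      then have lt: "real (r k i) < C * real M" using Mpos by (simp add: divide_less_eq)
      have C0: "0 \<le> C" by (simp add: C_def)
      have "C * real M \<le> C * real (r k j)" using C0 Mle by (simp add: mult_left_mono)
      then have "real (r k i) \<le> C * real (r k j)" using lt by linarith
      then show ?case by (simp add: mult_right_mono mult.assoc[symmetric])
    qed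
  qed
qed

theorem proposition2p4:
  fixes p :: "nat pmf" and m :: nat and n :: "nat \<Rightarrow> nat" and r :: "nat \<Rightarrow> nat \<Rightarrow> nat"
  assumes mean_fin: "integrable (measure_pmf p) real"
    and mean_pos: "gw_mean p > 0"
    and unbounded: "infinite {k. pmf p k > 0}"
    and m_pos: "m \<ge> 1"
    and n_pos: "\<forall>i\<in>{1..m}. n i > 0"
    and n_mono: "\<forall>i\<in>{1..m}. \<forall>j\<in>{1..m}. i < j \<longrightarrow> n i < n j"
    and r_pos: "\<forall>k\<ge>1. \<forall>i\<in>{1..m}. r k i > 0"
    and r_prob: "\<forall>k\<ge>1. (\<Sum>i=1..m. pmf p (r k i)) > 0"
    and r_min: "filterlim (\<lambda>k. Min (r k ` {1..m})) at_top sequentially"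
    and r_ratio: "\<forall>j. 1 \<le> j \<and> j < m \<longrightarrow>
        limsup (\<lambda>k. ereal (real (r k j) / real (Min (r k ` {j<..m})))) < \<infinity>"
  shows "(\<lambda>k. measure (gw_space p)
            {\<omega> \<in> space (gw_space p). \<exists>i\<in>{1..m}. gen_max \<omega> (n i) = r k i \<and>
               (\<forall>j\<in>{1..m}. j \<noteq> i \<longrightarrow> gen_max \<omega> (n j) < r k j)})
         \<sim>[sequentially] (\<lambda>k. \<Sum>i=1..m. gw_mean p ^ n i * pmf p (r k i))"
proof -
  define \<mu> where "\<mu> = gw_mean p"
  have mu0: "0 < \<mu>" using mean_pos by (simp add: \<mu>_def)
  define A where "A k i = {f. gen_max f (n i) = r k i \<and> (\<forall>j\<in>{1..m}. j \<noteq> i \<longrightarrow> gen_max f (n j) < r k j)}" for k i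
  define H where "H k = {f. \<exists>j\<in>{1..m}. GE (n j) (r k j) f}" for k
  define J where "J i = {j\<in>{1..m}. n i < n j}" for i
  define \<delta> where "\<delta> k i = enn2real (\<integral>\<^sup>+v. emeasure (gw_space p) ({f. inT v f} \<inter> H k) \<partial>count_space (W (n i)))
      + (\<Sum>j\<in>J i. real (r k i) * \<mu> ^ (n j - 1) * measure (measure_pmf p) {r k j..})" for k i
  define PE where "PE k = measure (gw_space p) {\<omega> \<in> space (gw_space p). \<exists>i\<in>{1..m}. gen_max \<omega> (n i) = r k i \<and>
               (\<forall>j\<in>{1..m}. j \<noteq> i \<longrightarrow> gen_max \<omega> (n j) < r k j)}" for k
  define S where "S k = (\<Sum>i=1..m. \<mu> ^ n i * pmf p (r k i))" for k
  define e where "e k = (\<Sum>i=1..m. \<delta> k i / \<mu> ^ n i)" for k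
  have ninj: "\<forall>j\<in>{1..m}. \<forall>l\<in>{1..m}. n j = n l \<longrightarrow> j = l"
    using n_mono by (metis linorder_neqE_nat less_irrefl)
  have Hs: "H k \<in> sets (gw_space p)" for k unfolding H_def by (intro pred_gw) measurable
  have PE_eq: "PE k = (\<Sum>i=1..m. measure (gw_space p) (A k i))" if k: "k \<ge> 1" for k
  proof -
    have rp: "\<forall>j\<in>{1..m}. 0 < r k j" using r_pos k by auto
    have "{\<omega> \<in> space (gw_space p). \<exists>i\<in>{1..m}. gen_max \<omega> (n i) = r k i \<and>
               (\<forall>j\<in>{1..m}. j \<noteq> i \<longrightarrow> gen_max \<omega> (n j) < r k j)} = (\<Union>i\<in>{1..m}. A k i)"
      by (auto simp: A_def)
    moreover have "measure (gw_space p) (\<Union>i\<in>{1..m}. A k i) = (\<Sum>i=1..m. measure (gw_space p) (A k i))"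
    proof (rule measure_finite_Union)
      show "A k ` {1..m} \<subseteq> sets (gw_space p)" using A_sets[OF rp] by (auto simp: A_def)
      show "disjoint_family_on (A k) {1..m}"
        unfolding disjoint_family_on_def A_def by fastforce
      show "emeasure (gw_space p) (A k i) \<noteq> \<infinity>" for i by (simp add: emeasure_gw_real)
    qed simp
    ultimately show ?thesis by (simp add: PE_def)
  qed
  have up: "measure (gw_space p) (A k i) \<le> \<mu> ^ n i * pmf p (r k i)" if "k \<ge> 1" "i \<in> {1..m}" for k i
    unfolding A_def \<mu>_def using r_pos that by (intro upper_real[OF mean_fin]) auto
  have low: "\<mu> ^ n i * pmf p (r k i) \<le> measure (gw_space p) (A k i) + pmf p (r k i) * \<delta> k i"
    if "k \<ge> 1" "i \<in> {1..m}" for k i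
    unfolding A_def \<delta>_def \<mu>_def H_def J_def using r_pos that by (intro lower_real[OF mean_fin _ _ ninj]) auto
  have \<delta>0: "0 \<le> \<delta> k i" for k i
    unfolding \<delta>_def using mu0 by (intro add_nonneg_nonneg sum_nonneg) auto
  have qlim: "(\<lambda>k. measure (measure_pmf p) {r k j..}) \<longlonglongrightarrow> 0" if j: "j \<in> {1..m}" for j
  proof -
    have rj: "filterlim (\<lambda>k. r k j) at_top sequentially"
    proof (rule filterlim_at_top_mono[OF r_min])
      show "\<forall>\<^sub>F k in sequentially. Min (r k ` {1..m}) \<le> r k j"
        using j by (intro always_eventually allI Min_le) auto
    qed
    show ?thesis using filterlim_compose[OF tail_lim2[OF mean_fin] rj] by simp
  qed
  have HP: "(\<lambda>k. measure (gw_space p) (H k)) \<longlonglongrightarrow> 0"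
  proof (rule tendsto_sandwich[OF _ _ tendsto_const])
    show "\<forall>\<^sub>F k in sequentially. 0 \<le> measure (gw_space p) (H k)" by simp
    show "((\<lambda>k. \<Sum>j=1..m. \<mu> ^ n j * measure (measure_pmf p) {r k j..}) \<longlongrightarrow> 0) sequentially"
    proof -
      have "((\<lambda>k. \<Sum>j=1..m. \<mu> ^ n j * measure (measure_pmf p) {r k j..}) \<longlongrightarrow> (\<Sum>j=1..m. 0)) sequentially"
        by (intro tendsto_sum tendsto_mult_right_zero qlim)
      then show ?thesis by simp
    qed
    show "\<forall>\<^sub>F k in sequentially. measure (gw_space p) (H k) \<le> (\<Sum>j=1..m. \<mu> ^ n j * measure (measure_pmf p) {r k j..})"
    proof (intro always_eventually allI)
      fix k
      have "measure (gw_space p) (H k) = measure (gw_space p) (\<Union>j\<in>{1..m}. {f. GE (n j) (r k j) f})"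
        unfolding H_def by (intro arg_cong[where f="measure (gw_space p)"]) blast
      also have "\<dots> \<le> (\<Sum>j=1..m. measure (gw_space p) {f. GE (n j) (r k j) f})"
        by (intro measure_UNION_le) auto
      also have "\<dots> \<le> (\<Sum>j=1..m. \<mu> ^ n j * measure (measure_pmf p) {r k j..})"
      proof (intro sum_mono)
        fix j
        have "ennreal (measure (gw_space p) {f. GE (n j) (r k j) f}) \<le> ennreal (\<mu> ^ n j * measure (measure_pmf p) {r k j..})"
          using GE_bound[OF mean_fin, of "n j" "r k j"] mu0
          by (simp add: emeasure_gw_real \<mu>_def ennreal_mult measure_pmf.emeasure_eq_measure)
        then show "measure (gw_space p) {f. GE (n j) (r k j) f} \<le> \<mu> ^ n j * measure (measure_pmf p) {r k j..}"
          using mu0 by simp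
      qed
      finally show "measure (gw_space p) (H k) \<le> (\<Sum>j=1..m. \<mu> ^ n j * measure (measure_pmf p) {r k j..})" .
    qed
  qed
  have \<delta>lim: "(\<lambda>k. \<delta> k i) \<longlonglongrightarrow> 0" if i: "i \<in> {1..m}" for i
  proof -
    have D: "(\<lambda>k. enn2real (\<integral>\<^sup>+v. emeasure (gw_space p) ({f. inT v f} \<inter> H k) \<partial>count_space (W (n i)))) \<longlonglongrightarrow> 0"
      by (rule D_lim[OF mean_fin Hs HP])
    have T: "(\<lambda>k. real (r k i) * \<mu> ^ (n j - 1) * measure (measure_pmf p) {r k j..}) \<longlonglongrightarrow> 0" if j: "j \<in> J i" for j
    proof -
      have ij: "i < j" using j i n_mono unfolding J_def by (metis (mono_tags, lifting) mem_Collect_eq not_less_iff_gr_or_eq order_less_asym)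
      have jm: "j \<in> {i<..m}" using j ij by (auto simp: J_def)
      have "limsup (\<lambda>k. ereal (real (r k i) / real (Min (r k ` {i<..m})))) < \<infinity>"
        using r_ratio i jm by auto
      from ratio_lim[OF mean_fin r_min r_pos this _ jm] i
      have "(\<lambda>k. real (r k i) * measure (measure_pmf p) {r k j..}) \<longlonglongrightarrow> 0" by auto
      from tendsto_mult_right_zero[OF this, of "\<mu> ^ (n j - 1)"]
      show ?thesis by (simp add: mult_ac)
    qed
    have "(\<lambda>k. \<Sum>j\<in>J i. real (r k i) * \<mu> ^ (n j - 1) * measure (measure_pmf p) {r k j..}) \<longlonglongrightarrow> 0"
    proof -
      have "(\<lambda>k. \<Sum>j\<in>J i. real (r k i) * \<mu> ^ (n j - 1) * measure (measure_pmf p) {r k j..}) \<longlonglongrightarrow> (\<Sum>j\<in>J i. 0)"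
        by (intro tendsto_sum T)
      then show ?thesis by simp
    qed
    from tendsto_add[OF D this] show ?thesis by (simp add: \<delta>_def)
  qed
  have elim: "e \<longlonglongrightarrow> 0"
  proof -
    have "(\<lambda>k. \<Sum>i=1..m. \<delta> k i / \<mu> ^ n i) \<longlonglongrightarrow> (\<Sum>i=1..m. 0)"
      by (intro tendsto_sum tendsto_divide_zero \<delta>lim)
    then show ?thesis by (simp add: e_def[abs_def])
  qed
  have bounds: "1 - e k \<le> PE k / S k \<and> PE k / S k \<le> 1 \<and> 0 < S k" if k: "k \<ge> 1" for k
  proof -
    have Spos: "0 < S k"
    proof -
      obtain i where i: "i \<in> {1..m}" "0 < pmf p (r k i)"
        using r_prob k by (metis (no_types, lifting) less_le pmf_nonneg sum_nonneg_eq_0_iff finite_atLeastAtMost)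
      show ?thesis unfolding S_def
        using i mu0 by (intro sum_pos2[of _ i]) auto
    qed
    have PE_le: "PE k \<le> S k" unfolding PE_eq[OF k] S_def using up k by (intro sum_mono) auto
    have "S k \<le> PE k + (\<Sum>i=1..m. pmf p (r k i) * \<delta> k i)"
      unfolding PE_eq[OF k] S_def sum.distrib[symmetric] using low k by (intro sum_mono) auto
    also have "(\<Sum>i=1..m. pmf p (r k i) * \<delta> k i) \<le> (\<Sum>i=1..m. S k * (\<delta> k i / \<mu> ^ n i))"
    proof (intro sum_mono)
      fix i assume i: "i \<in> {1..m}"
      have a_le: "\<mu> ^ n i * pmf p (r k i) \<le> S k"
        unfolding S_def using i mu0 by (intro member_le_sum) auto
      have "pmf p (r k i) * \<delta> k i = (\<mu> ^ n i * pmf p (r k i)) * (\<delta> k i / \<mu> ^ n i)"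
        using mu0 by (simp add: field_simps)
      also have "\<dots> \<le> S k * (\<delta> k i / \<mu> ^ n i)"
        using a_le \<delta>0 mu0 by (intro mult_right_mono) auto
      finally show "pmf p (r k i) * \<delta> k i \<le> S k * (\<delta> k i / \<mu> ^ n i)" .
    qed
    also have "\<dots> = S k * e k" by (simp add: e_def sum_distrib_left)
    finally have "S k - S k * e k \<le> PE k" by simp
    then have "1 - e k \<le> PE k / S k" using Spos by (simp add: field_simps)
    moreover have "PE k / S k \<le> 1" using PE_le Spos by simp
    ultimately show ?thesis using Spos by simp
  qed
  have "(\<lambda>k. PE k / S k) \<longlonglongrightarrow> 1"
  proof (rule tendsto_sandwich[of "\<lambda>k. 1 - e k" _ _ "\<lambda>_. 1"])
    show "\<forall>\<^sub>F k in sequentially. 1 - e k \<le> PE k / S k"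
      using eventually_ge_at_top[of "1::nat"] by eventually_elim (use bounds in blast)
    show "\<forall>\<^sub>F k in sequentially. PE k / S k \<le> 1"
      using eventually_ge_at_top[of "1::nat"] by eventually_elim (use bounds in blast)
    show "(\<lambda>k. 1 - e k) \<longlonglongrightarrow> 1" using tendsto_diff[OF tendsto_const elim, of 1] by simp
  qed simp
  then have "PE \<sim>[sequentially] S" by (rule asymp_equivI')
  then show ?thesis unfolding PE_def[abs_def] S_def[abs_def] \<mu>_def .
qed

end
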